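(* In the category $\mathbf{FCLS}$ of finite closure spaces, every descent morphism is an effective descent morphism.
   Context: A closure space is a pair $(A,\mathcal{C}_A)$ where $A$ is a set and $\mathcal{C}_A$ is a set of subsets of $A$ closed under arbitrary intersections (so $A\in\mathcal{C}_A$). $\mathbf{CLS}$ has closure spaces as objects and, as morphisms $\alpha:A\to B$, maps with $\alpha^{-1}(B')\in\mathcal{C}_A$ for all $B'\in\mathcal{C}_B$; $\mathbf{FCLS}$ is its full subcategory of closure spaces with finite underlying set (it has pullbacks and coequalizers of equivalence relations). For a morphism $p:E\to B$ in a category $\mathbf{C}$ with pullbacks, a descent data for $p$ is a triple $(C,\gamma,\xi)$ with $\gamma:C\to E$, $\xi:E\times_BC\to C$ (pullback of $p$ and $p\gamma$, projections $\pi_1,\pi_2$) such that $\gamma\xi=\pi_1$, $\xi\langle\gamma,1_C\rangle=1_C$, $\xi\circ(E\times_B\xi)=\xi\circ(E\times_B\pi_2)$; a morphism $(C,\gamma,\xi)\to(C',\gamma',\xi')$ is $f:C\to C'$ with $\gamma'f=\gamma$ and $f\xi=\xi'\circ(E\times_Bf)$. This gives a category $\mathrm{Des}(p)$ and a comparison functor $K^p:(\mathbf{C}\downarrow B)\to\mathrm{Des}(p)$, $K^p(A,\alpha)=(E\times_BA,\pi_1,E\times_B\pi_2)$. The morphism $p$ is a descent morphism if $K^p$ is fully faithful (equivalently, $p$ is a pullback-stable regular epimorphism), and an effective descent morphism if $K^p$ is an equivalence of categories. *)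

theory Defs
  imports Main
begin

text \<open>Closure spaces: C is a family of subsets of A closed under arbitrary
  intersections (the empty intersection being A itself).\<close>
definition closure_space :: "'a set \<Rightarrow> 'a set set \<Rightarrow> bool" where
  "closure_space A C \<longleftrightarrow> C \<subseteq> Pow A \<and> A \<in> C \<and> (\<forall>S. S \<subseteq> C \<and> S \<noteq> {} \<longrightarrow> \<Inter>S \<in> C)"

definition fcls :: "'a set \<Rightarrow> 'a set set \<Rightarrow> bool" where
  "fcls A C \<longleftrightarrow> closure_space A C \<and> finite A"

text \<open>Morphisms of CLS (maps are identified when they agree on the carrier).\<close>
definition cls_mor :: "'a set \<Rightarrow> 'a set set \<Rightarrow> 'b set \<Rightarrow> 'b set set \<Rightarrow> ('a \<Rightarrow> 'b) \<Rightarrow> bool" where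
  "cls_mor A CA B CB f \<longleftrightarrow> f ` A \<subseteq> B \<and> (\<forall>B'\<in>CB. {x\<in>A. f x \<in> B'} \<in> CA)"

text \<open>The (canonical) pullback of f : X \<rightarrow> Z and g : Y \<rightarrow> Z in CLS/FCLS:
  the set-theoretic pullback with the initial closure structure for the two projections.\<close>
definition pb_set :: "'x set \<Rightarrow> 'y set \<Rightarrow> ('x \<Rightarrow> 'z) \<Rightarrow> ('y \<Rightarrow> 'z) \<Rightarrow> ('x \<times> 'y) set" where
  "pb_set X Y f g = {(x, y). x \<in> X \<and> y \<in> Y \<and> f x = g y}"

definition pb_cl :: "'x set \<Rightarrow> 'x set set \<Rightarrow> 'y set \<Rightarrow> 'y set set \<Rightarrow> ('x \<Rightarrow> 'z) \<Rightarrow> ('y \<Rightarrow> 'z)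
    \<Rightarrow> ('x \<times> 'y) set set" where
  "pb_cl X CX Y CY f g =
     {{z \<in> pb_set X Y f g. fst z \<in> X' \<and> snd z \<in> Y'} | X' Y'. X' \<in> CX \<and> Y' \<in> CY}"

text \<open>The pullback E \<times>_B C is taken along p and
  p \<circ> gamma; E \<times>_B xi maps (e', (e, c)) to (e', xi (e, c)) and E \<times>_B pi2 maps it to (e', c).\<close>
definition descent_data ::
  "'e set \<Rightarrow> 'e set set \<Rightarrow> 'b set \<Rightarrow> 'b set set \<Rightarrow> ('e \<Rightarrow> 'b) \<Rightarrow>
   'c set \<Rightarrow> 'c set set \<Rightarrow> ('c \<Rightarrow> 'e) \<Rightarrow> ('e \<times> 'c \<Rightarrow> 'c) \<Rightarrow> bool" where
  "descent_data E CE B CB p C CC \<gamma> \<xi> \<longleftrightarrow>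
     fcls C CC \<and> cls_mor C CC E CE \<gamma> \<and>
     cls_mor (pb_set E C p (p \<circ> \<gamma>)) (pb_cl E CE C CC p (p \<circ> \<gamma>)) C CC \<xi> \<and>
     (\<forall>z \<in> pb_set E C p (p \<circ> \<gamma>). \<gamma> (\<xi> z) = fst z) \<and>
     (\<forall>c \<in> C. \<xi> (\<gamma> c, c) = c) \<and>
     (\<forall>e' \<in> E. \<forall>e \<in> E. \<forall>c \<in> C. p e' = p e \<and> p e = p (\<gamma> c) \<longrightarrow> \<xi> (e', \<xi> (e, c)) = \<xi> (e', c))"

definition des_mor ::
  "'e set \<Rightarrow> 'e set set \<Rightarrow> 'b set \<Rightarrow> 'b set set \<Rightarrow> ('e \<Rightarrow> 'b) \<Rightarrow>
   'c set \<Rightarrow> 'c set set \<Rightarrow> ('c \<Rightarrow> 'e) \<Rightarrow> ('e \<times> 'c \<Rightarrow> 'c) \<Rightarrow>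
   'd set \<Rightarrow> 'd set set \<Rightarrow> ('d \<Rightarrow> 'e) \<Rightarrow> ('e \<times> 'd \<Rightarrow> 'd) \<Rightarrow> ('c \<Rightarrow> 'd) \<Rightarrow> bool" where
  "des_mor E CE B CB p C CC \<gamma> \<xi> C' CC' \<gamma>' \<xi>' f \<longleftrightarrow>
     cls_mor C CC C' CC' f \<and> (\<forall>c \<in> C. \<gamma>' (f c) = \<gamma> c) \<and>
     (\<forall>z \<in> pb_set E C p (p \<circ> \<gamma>). f (\<xi> z) = \<xi>' (fst z, f (snd z)))"

definition des_iso ::
  "'e set \<Rightarrow> 'e set set \<Rightarrow> 'b set \<Rightarrow> 'b set set \<Rightarrow> ('e \<Rightarrow> 'b) \<Rightarrow>
   'c set \<Rightarrow> 'c set set \<Rightarrow> ('c \<Rightarrow> 'e) \<Rightarrow> ('e \<times> 'c \<Rightarrow> 'c) \<Rightarrow>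
   'd set \<Rightarrow> 'd set set \<Rightarrow> ('d \<Rightarrow> 'e) \<Rightarrow> ('e \<times> 'd \<Rightarrow> 'd) \<Rightarrow> ('c \<Rightarrow> 'd) \<Rightarrow> bool" where
  "des_iso E CE B CB p C CC \<gamma> \<xi> C' CC' \<gamma>' \<xi>' f \<longleftrightarrow>
     des_mor E CE B CB p C CC \<gamma> \<xi> C' CC' \<gamma>' \<xi>' f \<and>
     (\<exists>g. des_mor E CE B CB p C' CC' \<gamma>' \<xi>' C CC \<gamma> \<xi> g \<and>
          (\<forall>c \<in> C. g (f c) = c) \<and> (\<forall>d \<in> C'. f (g d) = d))"

definition slice_obj :: "'b set \<Rightarrow> 'b set set \<Rightarrow> 'a set \<Rightarrow> 'a set set \<Rightarrow> ('a \<Rightarrow> 'b) \<Rightarrow> bool" where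
  "slice_obj B CB A CA \<alpha> \<longleftrightarrow> fcls A CA \<and> cls_mor A CA B CB \<alpha>"

definition slice_mor ::
  "'a set \<Rightarrow> 'a set set \<Rightarrow> ('a \<Rightarrow> 'b) \<Rightarrow> 'a2 set \<Rightarrow> 'a2 set set \<Rightarrow> ('a2 \<Rightarrow> 'b) \<Rightarrow> ('a \<Rightarrow> 'a2) \<Rightarrow> bool" where
  "slice_mor A CA \<alpha> A' CA' \<alpha>' f \<longleftrightarrow> cls_mor A CA A' CA' f \<and> (\<forall>a \<in> A. \<alpha>' (f a) = \<alpha> a)"

text \<open>The comparison functor K^p: on objects (A, alpha) it gives
  (E \<times>_B A, pi1, E \<times>_B pi2), where E \<times>_B pi2 sends (e, (e', a)) to (e, a);
  on morphisms f it gives E \<times>_B f, i.e. (e, a) \<mapsto> (e, f a).\<close>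
definition K_xi :: "'e \<times> ('e \<times> 'a) \<Rightarrow> 'e \<times> 'a" where
  "K_xi z = (fst z, snd (snd z))"

definition K_mor :: "('a \<Rightarrow> 'a2) \<Rightarrow> 'e \<times> 'a \<Rightarrow> 'e \<times> 'a2" where
  "K_mor f z = (fst z, f (snd z))"

text \<open>p is a descent morphism: K^p is fully faithful.  Objects of the slice category are
  taken with carriers in nat; since all objects are finite, every object of (FCLS \<down> B) is
  isomorphic to such a one, so this is equivalent to full faithfulness on the whole slice.\<close>
definition descent_morphism :: "'e set \<Rightarrow> 'e set set \<Rightarrow> 'b set \<Rightarrow> 'b set set \<Rightarrow> ('e \<Rightarrow> 'b) \<Rightarrow> bool" where
  "descent_morphism E CE B CB p \<longleftrightarrow>
     (\<forall>(A :: nat set) CA \<alpha> (A' :: nat set) CA' \<alpha>'.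
        slice_obj B CB A CA \<alpha> \<longrightarrow> slice_obj B CB A' CA' \<alpha>' \<longrightarrow>
        (\<forall>g. des_mor E CE B CB p (pb_set E A p \<alpha>) (pb_cl E CE A CA p \<alpha>) fst K_xi
                                 (pb_set E A' p \<alpha>') (pb_cl E CE A' CA' p \<alpha>') fst K_xi g \<longrightarrow>
             (\<exists>f. slice_mor A CA \<alpha> A' CA' \<alpha>' f \<and> (\<forall>z \<in> pb_set E A p \<alpha>. K_mor f z = g z))) \<and>
        (\<forall>f1 f2. slice_mor A CA \<alpha> A' CA' \<alpha>' f1 \<longrightarrow> slice_mor A CA \<alpha> A' CA' \<alpha>' f2 \<longrightarrow>
             (\<forall>z \<in> pb_set E A p \<alpha>. K_mor f1 z = K_mor f2 z) \<longrightarrow> (\<forall>a \<in> A. f1 a = f2 a)))"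

text \<open>p is an effective descent morphism: K^p is an equivalence, i.e. fully faithful and
  essentially surjective.  Descent data are allowed to live on an arbitrary type 'c
  (the type parameter is universally quantified in any theorem using this notion).\<close>
definition effective_descent ::
  "'c itself \<Rightarrow> 'e set \<Rightarrow> 'e set set \<Rightarrow> 'b set \<Rightarrow> 'b set set \<Rightarrow> ('e \<Rightarrow> 'b) \<Rightarrow> bool" where
  "effective_descent _ E CE B CB p \<longleftrightarrow>
     descent_morphism E CE B CB p \<and>
     (\<forall>(C :: 'c set) CC \<gamma> \<xi>. descent_data E CE B CB p C CC \<gamma> \<xi> \<longrightarrow>
        (\<exists>(A :: nat set) CA \<alpha> f. slice_obj B CB A CA \<alpha> \<and>
           des_iso E CE B CB p C CC \<gamma> \<xi> (pb_set E A p \<alpha>) (pb_cl E CE A CA p \<alpha>) fst K_xi f))"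

end

theory Submission
  imports Defs
begin

lemma cs_Inter: "closure_space A C \<Longrightarrow> S \<subseteq> C \<Longrightarrow> S \<noteq> {} \<Longrightarrow> \<Inter>S \<in> C"
  unfolding closure_space_def by (elim conjE allE impE) (rule conjI)

lemma cs_pow: "closure_space A C \<Longrightarrow> X \<in> C \<Longrightarrow> X \<subseteq> A"
  unfolding closure_space_def by (elim conjE) (drule (1) subsetD, simp)

lemma cs_top: "closure_space A C \<Longrightarrow> A \<in> C"
  unfolding closure_space_def by (elim conjE)

lemma cs_inter:
  assumes "closure_space A C" "X \<in> C" "Y \<in> C"
  shows "X \<inter> Y \<in> C"
proof -
  have "\<forall>S. S \<subseteq> C \<and> S \<noteq> {} \<longrightarrow> \<Inter>S \<in> C"
    using assms(1) unfolding closure_space_def by (elim conjE)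
  hence "{X, Y} \<subseteq> C \<and> {X, Y} \<noteq> {} \<longrightarrow> \<Inter>{X, Y} \<in> C" by (rule spec)
  thus ?thesis using assms(2,3) by simp
qed

locale ddl =
  fixes E :: "'e set" and CE :: "'e set set" and B :: "'b set" and CB :: "'b set set"
    and p :: "'e \<Rightarrow> 'b"
    and C :: "'c set" and CC :: "'c set set" and g :: "'c \<Rightarrow> 'e" and x :: "'e \<times> 'c \<Rightarrow> 'c"
  assumes dd: "descent_data E CE B CB p C CC g x" and pm: "cls_mor E CE B CB p"
    and fE: "fcls E CE"
begin

lemmas ddu = dd[unfolded descent_data_def]
lemma fC: "fcls C CC" by (rule conjunct1[OF ddu])
lemma csC: "closure_space C CC" using fC unfolding fcls_def by (rule conjunct1)
lemma finC: "finite C" using fC unfolding fcls_def by (rule conjunct2)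
lemma CCpow: "S \<in> CC \<Longrightarrow> S \<subseteq> C" using csC by (rule cs_pow)
lemma gm: "cls_mor C CC E CE g" by (rule conjunct1[OF conjunct2[OF ddu]])
lemma xm: "cls_mor (pb_set E C p (p \<circ> g)) (pb_cl E CE C CC p (p \<circ> g)) C CC x"
  by (rule conjunct1[OF conjunct2[OF conjunct2[OF ddu]]])
lemma d4: "\<forall>z \<in> pb_set E C p (p \<circ> g). g (x z) = fst z"
  by (rule conjunct1[OF conjunct2[OF conjunct2[OF conjunct2[OF ddu]]]])
lemma d5: "\<forall>c \<in> C. x (g c, c) = c"
  by (rule conjunct1[OF conjunct2[OF conjunct2[OF conjunct2[OF conjunct2[OF ddu]]]]])
lemma d6: "\<forall>e' \<in> E. \<forall>e \<in> E. \<forall>c \<in> C. p e' = p e \<and> p e = p (g c) \<longrightarrow> x (e', x (e, c)) = x (e', c)"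
  by (rule conjunct2[OF conjunct2[OF conjunct2[OF conjunct2[OF conjunct2[OF ddu]]]]])
lemma g_in: "c \<in> C \<Longrightarrow> g c \<in> E" using gm unfolding cls_mor_def by blast
lemma pb2: "(e, c) \<in> pb_set E C p (p \<circ> g) \<longleftrightarrow> e \<in> E \<and> c \<in> C \<and> p e = p (g c)"
  unfolding pb_set_def by simp
lemma x_in: "e \<in> E \<Longrightarrow> c \<in> C \<Longrightarrow> p e = p (g c) \<Longrightarrow> x (e, c) \<in> C"
  using xm pb2 unfolding cls_mor_def by blast
lemma gx: "e \<in> E \<Longrightarrow> c \<in> C \<Longrightarrow> p e = p (g c) \<Longrightarrow> g (x (e, c)) = e"
  using d4 pb2 by fastforce
lemma unit: "c \<in> C \<Longrightarrow> x (g c, c) = c"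
  using d5 by blast
lemma assoc: "e' \<in> E \<Longrightarrow> e \<in> E \<Longrightarrow> c \<in> C \<Longrightarrow> p e' = p e \<Longrightarrow> p e = p (g c) \<Longrightarrow>
   x (e', x (e, c)) = x (e', c)"
  using d6 by blast

definition R where "R c c' \<longleftrightarrow> (\<exists>e\<in>E. p e = p (g c) \<and> c' = x (e, c))"

lemma R_refl: "c \<in> C \<Longrightarrow> R c c"
  unfolding R_def using g_in unit by force

lemma R_in: "c \<in> C \<Longrightarrow> R c c' \<Longrightarrow> c' \<in> C"
  unfolding R_def using x_in by blast

lemma R_pg: "c \<in> C \<Longrightarrow> R c c' \<Longrightarrow> p (g c') = p (g c)"
  unfolding R_def using gx by force

lemma R_sym: assumes "c \<in> C" "R c c'" shows "R c' c"
proof -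
  obtain e where e: "e \<in> E" "p e = p (g c)" "c' = x (e, c)" using assms unfolding R_def by blast
  have "g c' = e" using gx e assms by blast
  moreover have "x (g c, c') = c" using e assoc[of "g c" e c] g_in assms unit by simp
  ultimately show ?thesis unfolding R_def using g_in assms e by force
qed

lemma R_trans: assumes "c \<in> C" "R c c'" "R c' c''" shows "R c c''"
proof -
  obtain e where e: "e \<in> E" "p e = p (g c)" "c' = x (e, c)" using assms unfolding R_def by blast
  obtain e' where e': "e' \<in> E" "p e' = p (g c')" "c'' = x (e', c')" using assms unfolding R_def by blast
  have "g c' = e" using gx e assms by blast
  hence "c'' = x (e', c)" using e e' assoc[of e' e c] assms by simp
  thus ?thesis unfolding R_def using e e' \<open>g c' = e\<close> by force
qed

definition cls where "cls c = {c' \<in> C. R c c'}"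

lemma cls_eq: assumes "c \<in> C" "c' \<in> C" shows "cls c = cls c' \<longleftrightarrow> R c c'"
proof
  assume "cls c = cls c'"
  hence "c' \<in> cls c" using R_refl assms unfolding cls_def by blast
  thus "R c c'" unfolding cls_def by blast
next
  assume r: "R c c'"
  have r': "R c' c" using R_sym assms r by blast
  show "cls c = cls c'"
  proof
    show "cls c \<subseteq> cls c'" unfolding cls_def using R_trans[OF assms(2) r'] by blast
    show "cls c' \<subseteq> cls c" unfolding cls_def using R_trans[OF assms(1) r] by blast
  qed
qed

definition Q where "Q = cls ` C"
definition h where "h = (SOME h. bij_betw h Q {0..<card Q})"
lemma h_bij: "bij_betw h Q {0..<card Q}"
proof -
  have "finite Q" unfolding Q_def using finC by simp
  hence "\<exists>h. bij_betw h Q {0..<card Q}" by (rule ex_bij_betw_finite_nat)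
  thus ?thesis unfolding h_def by (rule someI_ex)
qed

definition qn where "qn c = h (cls c)"
lemma qn_eq: assumes "c \<in> C" "c' \<in> C" shows "qn c = qn c' \<longleftrightarrow> R c c'"
proof -
  have "inj_on h Q" using h_bij bij_betw_def by blast
  moreover have "cls c \<in> Q" "cls c' \<in> Q" unfolding Q_def using assms by auto
  ultimately have "qn c = qn c' \<longleftrightarrow> cls c = cls c'" unfolding qn_def by (simp add: inj_on_eq_iff)
  thus ?thesis using cls_eq assms by simp
qed

definition Aq :: "nat set" where "Aq = qn ` C"
lemma qn_A: "c \<in> C \<Longrightarrow> qn c \<in> Aq" unfolding Aq_def by simp
definition rep where "rep k = (SOME c. c \<in> C \<and> qn c = k)"
lemma rep: "k \<in> Aq \<Longrightarrow> rep k \<in> C \<and> qn (rep k) = k"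
  unfolding Aq_def rep_def by (rule someI_ex) blast
definition al where "al k = p (g (rep k))"
lemma al_qn: assumes "c \<in> C" shows "al (qn c) = p (g c)"
proof -
  have r: "rep (qn c) \<in> C" "qn (rep (qn c)) = qn c" using rep assms Aq_def by auto
  hence "R (rep (qn c)) c" using qn_eq assms by blast
  thus ?thesis unfolding al_def using R_pg r by simp
qed
definition CAq where "CAq = {Y. Y \<subseteq> Aq \<and> {c \<in> C. qn c \<in> Y} \<in> CC}"

lemma slice: "slice_obj B CB Aq CAq al"
proof -
  have cs: "closure_space Aq CAq" unfolding closure_space_def[of Aq]
  proof (intro conjI allI impI)
    show "CAq \<subseteq> Pow Aq" unfolding CAq_def by blast
    have "{c \<in> C. qn c \<in> Aq} = C" unfolding Aq_def by blast
    thus "Aq \<in> CAq" unfolding CAq_def using cs_top[OF csC] by auto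
  next
    fix S assume S: "S \<subseteq> CAq \<and> S \<noteq> {}"
    have "{c \<in> C. qn c \<in> \<Inter>S} = \<Inter>((\<lambda>Y. {c \<in> C. qn c \<in> Y}) ` S)" using S by auto
    moreover have "\<Inter>((\<lambda>Y. {c \<in> C. qn c \<in> Y}) ` S) \<in> CC"
      using S unfolding CAq_def by (intro cs_Inter[OF csC]) auto
    moreover have "\<Inter>S \<subseteq> Aq" using S unfolding CAq_def by blast
    ultimately show "\<Inter>S \<in> CAq" unfolding CAq_def by simp
  qed
  have fin: "finite Aq" unfolding Aq_def using finC by simp
  have m: "cls_mor Aq CAq B CB al" unfolding cls_mor_def
  proof (intro conjI ballI)
    show "al ` Aq \<subseteq> B" unfolding al_def using rep g_in pm unfolding cls_mor_def by blast
  next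
    fix B' assume B': "B' \<in> CB"
    have eq: "{c \<in> C. qn c \<in> {k \<in> Aq. al k \<in> B'}} = {c \<in> C. g c \<in> {e \<in> E. p e \<in> B'}}"
      using al_qn g_in qn_A by auto
    have e1: "{e \<in> E. p e \<in> B'} \<in> CE" using pm B' unfolding cls_mor_def by blast
    have cl: "{c \<in> C. g c \<in> {e \<in> E. p e \<in> B'}} \<in> CC"
      using gm e1 unfolding cls_mor_def by (elim conjE) (erule bspec)
    have "{c \<in> C. qn c \<in> {k \<in> Aq. al k \<in> B'}} \<in> CC"
      using cl by (subst eq)
    thus "{k \<in> Aq. al k \<in> B'} \<in> CAq" unfolding CAq_def by blast
  qed
  show ?thesis unfolding slice_obj_def fcls_def using cs fin m by blast
qed

lemma sat:
  assumes S: "S \<in> CC"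
  shows "\<exists>V X. V \<in> CC \<and> X \<in> CE \<and> (\<forall>v\<in>V. \<forall>c. R v c \<longrightarrow> c \<in> V) \<and> (\<forall>c\<in>V. c \<in> S \<longleftrightarrow> g c \<in> X) \<and> S \<subseteq> V"
proof -
  define QQ where "QQ = {V. V \<in> CC \<and> S \<subseteq> V \<and> (\<exists>X\<in>CE. \<forall>c\<in>V. c \<in> S \<longleftrightarrow> g c \<in> X)}"
  have EC: "E \<in> CE" using fE unfolding fcls_def by (auto intro: cs_top)
  have "S \<in> QQ" unfolding QQ_def using S g_in CCpow EC by blast
  moreover have "finite QQ"
    by (rule finite_subset[of _ "Pow C"]) (use CCpow finC QQ_def in auto)
  ultimately obtain V where V: "V \<in> QQ" and mx: "\<forall>W\<in>QQ. V \<subseteq> W \<longrightarrow> V = W"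
    using finite_has_maximal[of QQ] by blast
  obtain X where X: "X \<in> CE" "\<forall>c\<in>V. c \<in> S \<longleftrightarrow> g c \<in> X" using V QQ_def by blast
  have VC: "V \<in> CC" "S \<subseteq> V" using V QQ_def by auto
  have "{z \<in> pb_set E C p (p \<circ> g). x z \<in> V} \<in> pb_cl E CE C CC p (p \<circ> g)"
    using xm VC unfolding cls_mor_def by blast
  then obtain X' W where XW: "X' \<in> CE" "W \<in> CC"
    "{z \<in> pb_set E C p (p \<circ> g). x z \<in> V} = {z \<in> pb_set E C p (p \<circ> g). fst z \<in> X' \<and> snd z \<in> W}"
    unfolding pb_cl_def by blast
  have key: "e \<in> E \<Longrightarrow> c \<in> C \<Longrightarrow> p e = p (g c) \<Longrightarrow> x (e, c) \<in> V \<longleftrightarrow> e \<in> X' \<and> c \<in> W" for e c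
    using XW(3)[THEN eqset_imp_iff, of "(e, c)"] pb2[of e c] by auto
  have VW: "V \<subseteq> W"
  proof
    fix v assume "v \<in> V"
    hence "v \<in> C" using CCpow VC by blast
    thus "v \<in> W" using key[of "g v" v] unit g_in \<open>v \<in> V\<close> by simp
  qed
  have WC: "W \<subseteq> C" using CCpow XW by blast
  have Wc: "c \<in> W \<Longrightarrow> c \<in> V \<longleftrightarrow> g c \<in> X'" for c
    using key[of "g c" c] unit g_in WC by auto
  have "W \<in> QQ" unfolding QQ_def
  proof (intro CollectI conjI)
    show "W \<in> CC" by fact
    show "S \<subseteq> W" using VC VW by blast
    show "\<exists>X\<in>CE. \<forall>c\<in>W. (c \<in> S) = (g c \<in> X)"
    proof (intro bexI ballI)
      show "X \<inter> X' \<in> CE" using cs_inter[of E CE X X'] fE X XW unfolding fcls_def by blast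
      fix c assume "c \<in> W"
      show "(c \<in> S) = (g c \<in> X \<inter> X')" using Wc[OF \<open>c \<in> W\<close>] X VC by blast
    qed
  qed
  hence WV: "W = V" using mx VW by blast
  have "\<forall>v\<in>V. \<forall>c. R v c \<longrightarrow> c \<in> V"
  proof (intro ballI allI impI)
    fix v c assume v: "v \<in> V" and r: "R v c"
    have vC: "v \<in> C" using v CCpow VC by blast
    obtain e where e: "e \<in> E" "p e = p (g v)" "c = x (e, v)" using r R_def by blast
    have cC: "c \<in> C" using R_in vC r by blast
    have gc: "g c = e" using gx e vC by blast
    have "x (g v, c) = v" using e assoc[of "g v" e v] g_in vC unit by simp
    hence "x (g v, c) \<in> V" using v by simp
    hence "c \<in> W" using key[of "g v" c] g_in vC cC gc e by simp
    thus "c \<in> V" using WV by simp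
  qed
  thus ?thesis using VC X by blast
qed


lemma R_x: "e \<in> E \<Longrightarrow> c \<in> C \<Longrightarrow> p e = p (g c) \<Longrightarrow> R c (x (e, c))"
  unfolding R_def by blast

lemma Pmem: "(e, k) \<in> pb_set E Aq p al \<longleftrightarrow> e \<in> E \<and> k \<in> Aq \<and> p e = al k"
  unfolding pb_set_def by simp

lemma Pfacts:
  assumes "e \<in> E" "k \<in> Aq" "p e = al k"
  shows "rep k \<in> C" "qn (rep k) = k" "p e = p (g (rep k))" "x (e, rep k) \<in> C"
    "g (x (e, rep k)) = e" "qn (x (e, rep k)) = k"
proof -
  show r: "rep k \<in> C" "qn (rep k) = k" using rep assms by auto
  show pe: "p e = p (g (rep k))" using al_qn[of "rep k"] r assms by simp
  show xi: "x (e, rep k) \<in> C" using x_in assms r pe by blast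
  show "g (x (e, rep k)) = e" using gx assms r pe by blast
  have "R (rep k) (x (e, rep k))" using R_x assms r pe by blast
  thus "qn (x (e, rep k)) = k" using qn_eq[of "rep k" "x (e, rep k)"] r xi by simp
qed

lemma eff: "\<exists>(A::nat set) CA \<alpha> f. slice_obj B CB A CA \<alpha> \<and>
   des_iso E CE B CB p C CC g x (pb_set E A p \<alpha>) (pb_cl E CE A CA p \<alpha>) fst K_xi f"
proof -
  define f where "f c = (g c, qn c)" for c
  define g' where "g' z = x (fst z, rep (snd z))" for z :: "'e \<times> nat"
  let ?P = "pb_set E Aq p al"
  have m1: "cls_mor C CC ?P (pb_cl E CE Aq CAq p al) f" unfolding cls_mor_def
  proof (intro conjI ballI)
    show "f ` C \<subseteq> ?P" using g_in al_qn unfolding f_def Aq_def pb_set_def by auto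
  next
    fix Z assume "Z \<in> pb_cl E CE Aq CAq p al"
    then obtain X' Y' where Z: "Z = {z \<in> ?P. fst z \<in> X' \<and> snd z \<in> Y'}" "X' \<in> CE" "Y' \<in> CAq"
      unfolding pb_cl_def by blast
    have "{c \<in> C. f c \<in> Z} = {c \<in> C. g c \<in> X'} \<inter> {c \<in> C. qn c \<in> Y'}"
      using g_in al_qn unfolding Z f_def Aq_def pb_set_def by auto
    moreover have "{c \<in> C. g c \<in> X'} \<in> CC" using gm Z unfolding cls_mor_def by blast
    moreover have "{c \<in> C. qn c \<in> Y'} \<in> CC" using Z unfolding CAq_def by blast
    ultimately show "{c \<in> C. f c \<in> Z} \<in> CC" using cs_inter csC by simp
  qed
  have m3: "\<forall>z\<in>pb_set E C p (p \<circ> g). f (x z) = K_xi (fst z, f (snd z))"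
  proof
    fix z assume z: "z \<in> pb_set E C p (p \<circ> g)"
    obtain e c where ec: "z = (e, c)" "e \<in> E" "c \<in> C" "p e = p (g c)" using z pb2 by (cases z) auto
    have "qn (x (e, c)) = qn c" using qn_eq[of c "x (e, c)"] R_x ec x_in by simp
    thus "f (x z) = K_xi (fst z, f (snd z))" using gx ec unfolding f_def K_xi_def by simp
  qed
  have mf: "des_mor E CE B CB p C CC g x ?P (pb_cl E CE Aq CAq p al) fst K_xi f"
    unfolding des_mor_def using m1 m3 unfolding f_def by simp
  have g1: "cls_mor ?P (pb_cl E CE Aq CAq p al) C CC g'" unfolding cls_mor_def
  proof (intro conjI ballI)
    show "g' ` ?P \<subseteq> C" using Pfacts(4) Pmem unfolding g'_def by force
  next
    fix S assume S: "S \<in> CC"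
    obtain V X where VX: "V \<in> CC" "X \<in> CE" "\<forall>v\<in>V. \<forall>c. R v c \<longrightarrow> c \<in> V"
      "\<forall>c\<in>V. c \<in> S \<longleftrightarrow> g c \<in> X" "S \<subseteq> V" using sat[OF S] by blast
    have VC: "V \<subseteq> C" using CCpow VX by blast
    have Vq: "c \<in> C \<Longrightarrow> c \<in> V \<longleftrightarrow> qn c \<in> qn ` V" for c
    proof
      assume "c \<in> C" "qn c \<in> qn ` V"
      then obtain v where "v \<in> V" "qn c = qn v" by blast
      thus "c \<in> V" using qn_eq[of v c] VC \<open>c \<in> C\<close> VX(3) by auto
    qed auto
    have "{c \<in> C. qn c \<in> qn ` V} = V" using Vq VC by blast
    hence YC: "qn ` V \<in> CAq" unfolding CAq_def Aq_def using VX VC by auto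
    have "{z \<in> ?P. g' z \<in> S} = {z \<in> ?P. fst z \<in> X \<and> snd z \<in> qn ` V}"
    proof (intro Collect_cong conj_cong refl)
      fix z assume z: "z \<in> ?P"
      obtain e k where ek: "z = (e, k)" "e \<in> E" "k \<in> Aq" "p e = al k" using z Pmem by (cases z) auto
      note F = Pfacts[OF ek(2-4)]
      have "g' z \<in> S \<longleftrightarrow> x (e, rep k) \<in> V \<and> g (x (e, rep k)) \<in> X"
        using VX(4,5) unfolding g'_def ek by auto
      also have "\<dots> \<longleftrightarrow> k \<in> qn ` V \<and> e \<in> X" using Vq[OF F(4)] F by simp
      finally show "g' z \<in> S \<longleftrightarrow> fst z \<in> X \<and> snd z \<in> qn ` V" using ek by auto
    qed
    thus "{z \<in> ?P. g' z \<in> S} \<in> pb_cl E CE Aq CAq p al" unfolding pb_cl_def using VX YC by blast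
  qed
  have g2: "\<forall>z\<in>?P. g (g' z) = fst z"
    using Pfacts(5) Pmem unfolding g'_def by force
  have g3: "\<forall>z\<in>pb_set E ?P p (p \<circ> fst). g' (K_xi z) = x (fst z, g' (snd z))"
  proof
    fix z assume z: "z \<in> pb_set E ?P p (p \<circ> fst)"
    obtain e' e k where ek: "z = (e', (e, k))" "e' \<in> E" "e \<in> E" "k \<in> Aq" "p e = al k" "p e' = p e"
      using z unfolding pb_set_def by auto
    note F = Pfacts[OF ek(3-5)]
    show "g' (K_xi z) = x (fst z, g' (snd z))"
      using assoc[of e' e "rep k"] ek F unfolding g'_def K_xi_def by simp
  qed
  have mg: "des_mor E CE B CB p ?P (pb_cl E CE Aq CAq p al) fst K_xi C CC g x g'"
    unfolding des_mor_def using g1 g2 g3 by simp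
  have i1: "\<forall>c\<in>C. g' (f c) = c"
  proof
    fix c assume c: "c \<in> C"
    define r where "r = rep (qn c)"
    have r: "r \<in> C" "qn r = qn c" using rep c unfolding r_def Aq_def by auto
    hence "R r c" using qn_eq c by blast
    then obtain e0 where e0: "e0 \<in> E" "p e0 = p (g r)" "c = x (e0, r)" unfolding R_def by blast
    have "g c = e0" using gx e0 r by simp
    thus "g' (f c) = c" using e0 unfolding g'_def f_def r_def by simp
  qed
  have i2: "\<forall>d\<in>?P. f (g' d) = d"
  proof
    fix d assume d: "d \<in> ?P"
    obtain e k where ek: "d = (e, k)" "e \<in> E" "k \<in> Aq" "p e = al k" using d Pmem by (cases d) auto
    note F = Pfacts[OF ek(2-4)]
    show "f (g' d) = d" using F ek unfolding f_def g'_def by simp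
  qed
  have "des_iso E CE B CB p C CC g x ?P (pb_cl E CE Aq CAq p al) fst K_xi f"
    unfolding des_iso_def using mf mg i1 i2 by blast
  thus ?thesis using slice by blast
qed

end

theorem theorem4p3:
  fixes E :: "'e set" and CE :: "'e set set" and B :: "'b set" and CB :: "'b set set"
    and p :: "'e \<Rightarrow> 'b"
  assumes "fcls E CE" and "fcls B CB" and "cls_mor E CE B CB p"
    and "descent_morphism E CE B CB p"
  shows "effective_descent TYPE('c) E CE B CB p"
  unfolding effective_descent_def
proof (intro conjI allI impI)
  show "descent_morphism E CE B CB p" by fact
next
  fix C :: "'c set" and CC \<gamma> \<xi>
  assume "descent_data E CE B CB p C CC \<gamma> \<xi>"
  then interpret ddl E CE B CB p C CC \<gamma> \<xi> using assms by unfold_locales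
  show "\<exists>(A :: nat set) CA \<alpha> f. slice_obj B CB A CA \<alpha> \<and>
           des_iso E CE B CB p C CC \<gamma> \<xi> (pb_set E A p \<alpha>) (pb_cl E CE A CA p \<alpha>) fst K_xi f"
    by (rule eff)
qed

end
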